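(* For $k=1,\dots,K$, let $\mathcal{P}^k$ be a family of probability densities on $\mathbb{R}^n$, and let $X^k_1,X^k_2\subset\mathbb{R}^n$ be nonempty closed convex non-intersecting sets, one of them bounded. Let $(x^{1}_{k*},x^{2}_{k*})$ minimize $\|x^1-x^2\|_2$ over $x^1\in X^k_1,x^2\in X^k_2$, and set $h_k=(x^1_{k*}-x^2_{k*})/\|x^1_{k*}-x^2_{k*}\|_2$, $c_k=\tfrac12h_k^T(x^1_{k*}+x^2_{k*})$, $\delta_k=\tfrac12\|x^1_{k*}-x^2_{k*}\|_2$. Given potentials $\eta_1,\dots,\eta_K$, let $\phi^{(K)}(\omega_1,\dots,\omega_K)=\sum_{k=1}^K\eta_k(h_k^T\omega_k-c_k)$. Consider observations $\omega_k=x_k+\xi_k$, $k\le K$, where $(x_k)$ is a deterministic sequence, $\xi_k\sim p_k$ are independent and $(p_k\in\mathcal{P}^k)$ is a deterministic sequence, and the hypotheses $H_\chi:\ x_k\in X^k_\chi$ for all $k\le K$, $\chi=1,2$. Let $\mathcal{T}^\eta_K$ accept $H_1$ when $\phi^{(K)}(\omega_1,\dots,\omega_K)\ge0$ and accept $H_2$ otherwise. Then the risk of $\mathcal{T}^\eta_K$ does not exceed $\prod_{k=1}^K\mathrm{risk}_{\delta_k}(\eta_k|\mathcal{P}^k)$.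
   Context: A potential is an odd, nondecreasing Borel function $\eta:\mathbb{R}\to\mathbb{R}$. For a family $\mathcal{P}$ of probability densities on $\mathbb{R}^n$, $\delta\ge0$ and a potential $\eta$, $\mathrm{risk}_\delta(\eta|\mathcal{P})$ is the smallest $\epsilon$ such that for all unit $e\in\mathbb{R}^n$ and all $p\in\mathcal{P}$: $\int e^{-\eta(\delta+e^T\xi)}p(\xi)d\xi\le\epsilon$ and $\int e^{\eta(e^T\xi-\delta)}p(\xi)d\xi\le\epsilon$. The risk of a test is $\max_{\chi=1,2}$ of the supremum, over all deterministic sequences $x_k\in X^k_\chi$ and $p_k\in\mathcal{P}^k$, $k\le K$, of the probability that the test rejects $H_\chi$. *)

theory Defs
  imports "HOL-Probability.Probability"
begin

definition is_potential :: "(real \<Rightarrow> real) \<Rightarrow> bool" where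
  "is_potential \<eta> \<longleftrightarrow> (\<forall>t. \<eta> (- t) = - \<eta> t) \<and> mono \<eta> \<and> \<eta> \<in> borel_measurable borel"

definition is_prob_density :: "('a::euclidean_space \<Rightarrow> real) \<Rightarrow> bool" where
  "is_prob_density p \<longleftrightarrow> p \<in> borel_measurable borel \<and> (\<forall>x. 0 \<le> p x)
      \<and> (\<integral>\<^sup>+ x. ennreal (p x) \<partial>lborel) = 1"

text \<open>risk_delta(eta | P): the smallest epsilon bounding both integrals for all unit e
  and all p in P, i.e. the supremum of these integrals (in [0, infinity]).\<close>
definition risk_pot :: "real \<Rightarrow> (real \<Rightarrow> real) \<Rightarrow> ('a::euclidean_space \<Rightarrow> real) set \<Rightarrow> ennreal" where
  "risk_pot \<delta> \<eta> P = (SUP ep \<in> {e. norm e = 1} \<times> P.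
      max (\<integral>\<^sup>+ \<xi>. ennreal (exp (- \<eta> (\<delta> + fst ep \<bullet> \<xi>)) * snd ep \<xi>) \<partial>lborel)
          (\<integral>\<^sup>+ \<xi>. ennreal (exp (\<eta> (fst ep \<bullet> \<xi> - \<delta>)) * snd ep \<xi>) \<partial>lborel))"

definition noise_measure :: "nat \<Rightarrow> (nat \<Rightarrow> 'a::euclidean_space \<Rightarrow> real) \<Rightarrow> (nat \<Rightarrow> 'a) measure" where
  "noise_measure K p = (\<Pi>\<^sub>M k\<in>{1..K}. density lborel (\<lambda>\<xi>. ennreal (p k \<xi>)))"

definition test_risk :: "nat \<Rightarrow> (nat \<Rightarrow> 'a::euclidean_space set) \<Rightarrow> (nat \<Rightarrow> 'a set)
    \<Rightarrow> (nat \<Rightarrow> ('a \<Rightarrow> real) set) \<Rightarrow> ((nat \<Rightarrow> 'a) \<Rightarrow> real) \<Rightarrow> ennreal" where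
  "test_risk K X1 X2 P \<phi> = max
     (SUP xp \<in> {(x, p). \<forall>k\<in>{1..K}. x k \<in> X1 k \<and> p k \<in> P k}.
        emeasure (noise_measure K (snd xp))
          {\<xi> \<in> space (noise_measure K (snd xp)). \<phi> (\<lambda>k. fst xp k + \<xi> k) < 0})
     (SUP xp \<in> {(x, p). \<forall>k\<in>{1..K}. x k \<in> X2 k \<and> p k \<in> P k}.
        emeasure (noise_measure K (snd xp))
          {\<xi> \<in> space (noise_measure K (snd xp)). \<phi> (\<lambda>k. fst xp k + \<xi> k) \<ge> 0})"

end

theory Submission imports Defs begin

lemma dens_sigma:
  assumes "is_prob_density (p::'a::euclidean_space \<Rightarrow> real)"
  shows "sigma_finite_measure (density lborel (\<lambda>\<xi>. ennreal (p \<xi>)))"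
proof -
  have "emeasure (density lborel (\<lambda>\<xi>. ennreal (p \<xi>))) (space (density lborel (\<lambda>\<xi>. ennreal (p \<xi>)))) = 1"
    using assms unfolding is_prob_density_def
    by (simp add: emeasure_density)
  then have "finite_measure (density lborel (\<lambda>\<xi>. ennreal (p \<xi>)))"
    by (intro finite_measureI) simp
  then show ?thesis by (rule finite_measure.sigma_finite_measure)
qed

lemma prod_exp_integral:
  fixes p :: "nat \<Rightarrow> 'a::euclidean_space \<Rightarrow> real"
  assumes dp: "\<And>k. k \<in> {1..K} \<Longrightarrow> is_prob_density (p k)"
    and fm: "\<And>k. k \<in> {1..K} \<Longrightarrow> f k \<in> borel_measurable borel"
  shows "(\<integral>\<^sup>+\<xi>. ennreal (exp (\<Sum>k\<in>{1..K}. f k (\<xi> k))) \<partial>noise_measure K p)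
     = (\<Prod>k\<in>{1..K}. \<integral>\<^sup>+t. ennreal (exp (f k t) * p k t) \<partial>lborel)"
proof -
  define M where "M k = (if k \<in> {1..K} then density lborel (\<lambda>\<xi>. ennreal (p k \<xi>)) else lborel)" for k
  have NM: "noise_measure K p = PiM {1..K} M" unfolding noise_measure_def M_def
    by (intro PiM_cong) auto
  have "product_sigma_finite M"
    unfolding product_sigma_finite_def M_def
    using dens_sigma[OF dp] lborel.sigma_finite_measure_axioms by auto
  then interpret product_sigma_finite M .
  have fe: "\<And>k. k \<in> {1..K} \<Longrightarrow> (\<lambda>t. exp (f k t)) \<in> borel_measurable borel"
    by (rule measurable_compose[OF fm borel_measurable_exp])
  have "(\<integral>\<^sup>+\<xi>. ennreal (exp (\<Sum>k\<in>{1..K}. f k (\<xi> k))) \<partial>noise_measure K p)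
      = (\<integral>\<^sup>+\<xi>. (\<Prod>k\<in>{1..K}. ennreal (exp (f k (\<xi> k)))) \<partial>PiM {1..K} M)"
    unfolding NM by (simp add: exp_sum prod_ennreal)
  also have "\<dots> = (\<Prod>k\<in>{1..K}. \<integral>\<^sup>+t. ennreal (exp (f k t)) \<partial>M k)"
    using fe by (intro product_nn_integral_prod) (auto simp: M_def)
  also have "\<dots> = (\<Prod>k\<in>{1..K}. \<integral>\<^sup>+t. ennreal (exp (f k t) * p k t) \<partial>lborel)"
  proof (intro prod.cong refl)
    fix k assume k: "k \<in> {1..K}"
    have pm: "p k \<in> borel_measurable borel" and pn: "\<And>x. 0 \<le> p k x"
      using dp[OF k] unfolding is_prob_density_def by auto
    show "(\<integral>\<^sup>+t. ennreal (exp (f k t)) \<partial>M k) = (\<integral>\<^sup>+t. ennreal (exp (f k t) * p k t) \<partial>lborel)"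
      using k pm pn
      by (simp add: M_def nn_integral_density fe
            ennreal_mult' mult.commute)
  qed
  finally show ?thesis .
qed

theorem corollary2p11:
  fixes K :: nat
    and P :: "nat \<Rightarrow> ('a::euclidean_space \<Rightarrow> real) set"
    and X1 X2 :: "nat \<Rightarrow> 'a set"
    and x1s x2s h :: "nat \<Rightarrow> 'a"
    and c \<delta> :: "nat \<Rightarrow> real"
    and \<eta> :: "nat \<Rightarrow> real \<Rightarrow> real"
  assumes dens: "\<And>k p. k \<in> {1..K} \<Longrightarrow> p \<in> P k \<Longrightarrow> is_prob_density p"
    and ne1: "\<And>k. k \<in> {1..K} \<Longrightarrow> X1 k \<noteq> {}" and ne2: "\<And>k. k \<in> {1..K} \<Longrightarrow> X2 k \<noteq> {}"
    and cl1: "\<And>k. k \<in> {1..K} \<Longrightarrow> closed (X1 k)" and cl2: "\<And>k. k \<in> {1..K} \<Longrightarrow> closed (X2 k)"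
    and cv1: "\<And>k. k \<in> {1..K} \<Longrightarrow> convex (X1 k)" and cv2: "\<And>k. k \<in> {1..K} \<Longrightarrow> convex (X2 k)"
    and disj: "\<And>k. k \<in> {1..K} \<Longrightarrow> X1 k \<inter> X2 k = {}"
    and bdd: "\<And>k. k \<in> {1..K} \<Longrightarrow> bounded (X1 k) \<or> bounded (X2 k)"
    and x1s: "\<And>k. k \<in> {1..K} \<Longrightarrow> x1s k \<in> X1 k" and x2s: "\<And>k. k \<in> {1..K} \<Longrightarrow> x2s k \<in> X2 k"
    and minim: "\<And>k a b. k \<in> {1..K} \<Longrightarrow> a \<in> X1 k \<Longrightarrow> b \<in> X2 k \<Longrightarrow> norm (x1s k - x2s k) \<le> norm (a - b)"
    and h_def: "\<And>k. h k = (1 / norm (x1s k - x2s k)) *\<^sub>R (x1s k - x2s k)"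
    and c_def: "\<And>k. c k = (1 / 2) * (h k \<bullet> (x1s k + x2s k))"
    and \<delta>_def: "\<And>k. \<delta> k = (1 / 2) * norm (x1s k - x2s k)"
    and pot: "\<And>k. k \<in> {1..K} \<Longrightarrow> is_potential (\<eta> k)"
  shows "test_risk K X1 X2 P (\<lambda>\<omega>. \<Sum>k\<in>{1..K}. \<eta> k (h k \<bullet> \<omega> k - c k))
           \<le> (\<Prod>k\<in>{1..K}. risk_pot (\<delta> k) (\<eta> k) (P k))"
  proof -
  have facts: "norm (h k) = 1 \<and> (\<forall>a\<in>X1 k. \<delta> k \<le> h k \<bullet> a - c k) \<and> (\<forall>b\<in>X2 k. h k \<bullet> b - c k \<le> - \<delta> k)"
    if k: "k \<in> {1..K}" for k
  proof -
    define v where "v = x1s k - x2s k"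
    define n where "n = norm v"
    have "x1s k \<noteq> x2s k" using disj[OF k] x1s[OF k] x2s[OF k] by auto
    then have npos: "n > 0" unfolding n_def v_def by simp
    have vv: "v \<bullet> v = n^2" unfolding n_def by (simp add: power2_norm_eq_inner)
    have hk: "h k = (1/n) *\<^sub>R v" unfolding h_def n_def v_def by simp
    have ck: "c k = (1/2) * ((1/n) * (v \<bullet> (x1s k + x2s k)))" unfolding c_def hk by simp
    have dk: "\<delta> k = n / 2" unfolding \<delta>_def n_def v_def by simp
    have "norm (h k) = 1" using npos unfolding hk n_def by simp
    moreover have "\<delta> k \<le> h k \<bullet> a - c k" if a: "a \<in> X1 k" for a
    proof -
      have "inner (x2s k - x1s k) (a - x1s k) \<le> 0"
        apply (rule any_closest_point_dot[OF cv1[OF k] cl1[OF k] x1s[OF k] a])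
        using minim[OF k _ x2s[OF k]] by (simp add: dist_norm norm_minus_commute)
      then have g: "0 \<le> v \<bullet> (a - x1s k)" unfolding v_def
        by (metis inner_minus_left minus_diff_eq neg_le_0_iff_le)
      have "h k \<bullet> a - c k - \<delta> k = (1/n) * (v \<bullet> (a - x1s k))"
        using npos vv unfolding hk ck dk v_def
        apply (simp add: inner_diff_right inner_add_right inner_diff_left inner_commute field_simps power2_eq_square)
        by algebra
      moreover have "0 \<le> (1/n) * (v \<bullet> (a - x1s k))" using g npos by simp
      ultimately show ?thesis by linarith
    qed
    moreover have "h k \<bullet> b - c k \<le> - \<delta> k" if b: "b \<in> X2 k" for b
    proof -
      have "inner (x1s k - x2s k) (b - x2s k) \<le> 0"
        apply (rule any_closest_point_dot[OF cv2[OF k] cl2[OF k] x2s[OF k] b])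
        using minim[OF k x1s[OF k]] by (simp add: dist_norm)
      then have g: "v \<bullet> (b - x2s k) \<le> 0" unfolding v_def by simp
      have "h k \<bullet> b - c k + \<delta> k = (1/n) * (v \<bullet> (b - x2s k))"
        using npos vv unfolding hk ck dk v_def
        apply (simp add: inner_diff_right inner_add_right inner_diff_left inner_commute field_simps power2_eq_square)
        by algebra
      then have "h k \<bullet> b - c k + \<delta> k \<le> 0" using g npos
        by (simp add: divide_nonpos_pos)
      then show ?thesis by simp
    qed
    ultimately show ?thesis by blast
  qed
  have etam: "\<eta> k \<in> borel_measurable borel" and etamono: "mono (\<eta> k)" if "k \<in> {1..K}" for k
    using pot[OF that] unfolding is_potential_def by auto
  have argm: "(\<lambda>t. h k \<bullet> (x + t) - c k) \<in> borel_measurable borel" for k and x :: 'a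
    by measurable
  have fm: "(\<lambda>t. \<eta> k (h k \<bullet> (x + t) - c k)) \<in> borel_measurable borel" if "k \<in> {1..K}" for k x
    by (rule measurable_compose[OF argm etam[OF that]])
  have fm': "(\<lambda>t. - \<eta> k (h k \<bullet> (x + t) - c k)) \<in> borel_measurable borel" if "k \<in> {1..K}" for k x
    using fm[OF that] by measurable
  have chern: "emeasure N {\<xi> \<in> space N. Q \<xi>} \<le> (\<integral>\<^sup>+\<xi>. ennreal (exp (F \<xi>)) \<partial>N)"
    if "\<And>\<xi>. Q \<xi> \<Longrightarrow> 0 \<le> F \<xi>" for N Q and F :: "_ \<Rightarrow> real"
  proof (cases "{\<xi> \<in> space N. Q \<xi>} \<in> sets N")
    case True
    have "emeasure N {\<xi> \<in> space N. Q \<xi>} = (\<integral>\<^sup>+\<xi>. indicator {\<xi> \<in> space N. Q \<xi>} \<xi> \<partial>N)"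
      using True by simp
    also have "\<dots> \<le> (\<integral>\<^sup>+\<xi>. ennreal (exp (F \<xi>)) \<partial>N)"
      using that by (intro nn_integral_mono) (auto simp: indicator_def)
    finally show ?thesis .
  qed (simp add: emeasure_notin_sets)
  show ?thesis
    unfolding test_risk_def
  proof (intro max.boundedI SUP_least, goal_cases)
    case (1 xp)
    then obtain x p where xp: "xp = (x, p)" and hx: "\<And>k. k \<in> {1..K} \<Longrightarrow> x k \<in> X1 k \<and> p k \<in> P k"
      by auto
    let ?N = "noise_measure K p"
    have "emeasure ?N {\<xi> \<in> space ?N. (\<Sum>k\<in>{1..K}. \<eta> k (h k \<bullet> (x k + \<xi> k) - c k)) < 0}
       \<le> (\<integral>\<^sup>+\<xi>. ennreal (exp (\<Sum>k\<in>{1..K}. - \<eta> k (h k \<bullet> (x k + \<xi> k) - c k))) \<partial>?N)"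
      by (rule chern) (simp add: sum_negf)
    also have "\<dots> = (\<Prod>k\<in>{1..K}. \<integral>\<^sup>+t. ennreal (exp (- \<eta> k (h k \<bullet> (x k + t) - c k)) * p k t) \<partial>lborel)"
      by (rule prod_exp_integral) (use dens hx fm' in auto)
    also have "\<dots> \<le> (\<Prod>k\<in>{1..K}. risk_pot (\<delta> k) (\<eta> k) (P k))"
    proof (rule prod_mono_ennreal)
      fix k assume k: "k \<in> {1..K}"
      have pn: "\<And>t. 0 \<le> p k t" using dens[OF k] hx[OF k] unfolding is_prob_density_def by auto
      have "(\<integral>\<^sup>+t. ennreal (exp (- \<eta> k (h k \<bullet> (x k + t) - c k)) * p k t) \<partial>lborel)
          \<le> (\<integral>\<^sup>+t. ennreal (exp (- \<eta> k (\<delta> k + h k \<bullet> t)) * p k t) \<partial>lborel)"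
      proof (intro nn_integral_mono ennreal_leI mult_right_mono pn)
        fix t
        have "\<delta> k + h k \<bullet> t \<le> h k \<bullet> (x k + t) - c k"
          using facts[OF k] hx[OF k] by (simp add: inner_add_right)
        then have "\<eta> k (\<delta> k + h k \<bullet> t) \<le> \<eta> k (h k \<bullet> (x k + t) - c k)"
          using etamono[OF k] by (simp add: mono_def)
        then show "exp (- \<eta> k (h k \<bullet> (x k + t) - c k)) \<le> exp (- \<eta> k (\<delta> k + h k \<bullet> t))" by simp
      qed
      also have "\<dots> \<le> risk_pot (\<delta> k) (\<eta> k) (P k)"
        unfolding risk_pot_def
        by (rule SUP_upper2[where i="(h k, p k)"]) (use facts[OF k] hx[OF k] in auto)
      finally show "(\<integral>\<^sup>+t. ennreal (exp (- \<eta> k (h k \<bullet> (x k + t) - c k)) * p k t) \<partial>lborel)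
          \<le> risk_pot (\<delta> k) (\<eta> k) (P k)" .
    qed
    finally show ?case unfolding xp by simp
  next
    case (2 xp)
    then obtain x p where xp: "xp = (x, p)" and hx: "\<And>k. k \<in> {1..K} \<Longrightarrow> x k \<in> X2 k \<and> p k \<in> P k"
      by auto
    let ?N = "noise_measure K p"
    have "emeasure ?N {\<xi> \<in> space ?N. 0 \<le> (\<Sum>k\<in>{1..K}. \<eta> k (h k \<bullet> (x k + \<xi> k) - c k))}
       \<le> (\<integral>\<^sup>+\<xi>. ennreal (exp (\<Sum>k\<in>{1..K}. \<eta> k (h k \<bullet> (x k + \<xi> k) - c k))) \<partial>?N)"
      by (rule chern) simp
    also have "\<dots> = (\<Prod>k\<in>{1..K}. \<integral>\<^sup>+t. ennreal (exp (\<eta> k (h k \<bullet> (x k + t) - c k)) * p k t) \<partial>lborel)"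
      by (rule prod_exp_integral) (use dens hx fm in auto)
    also have "\<dots> \<le> (\<Prod>k\<in>{1..K}. risk_pot (\<delta> k) (\<eta> k) (P k))"
    proof (rule prod_mono_ennreal)
      fix k assume k: "k \<in> {1..K}"
      have pn: "\<And>t. 0 \<le> p k t" using dens[OF k] hx[OF k] unfolding is_prob_density_def by auto
      have "(\<integral>\<^sup>+t. ennreal (exp (\<eta> k (h k \<bullet> (x k + t) - c k)) * p k t) \<partial>lborel)
          \<le> (\<integral>\<^sup>+t. ennreal (exp (\<eta> k (h k \<bullet> t - \<delta> k)) * p k t) \<partial>lborel)"
      proof (intro nn_integral_mono ennreal_leI mult_right_mono pn)
        fix t
        have "h k \<bullet> (x k + t) - c k \<le> h k \<bullet> t - \<delta> k"
          using facts[OF k] hx[OF k] by (simp add: inner_add_right)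
        then have "\<eta> k (h k \<bullet> (x k + t) - c k) \<le> \<eta> k (h k \<bullet> t - \<delta> k)"
          using etamono[OF k] by (simp add: mono_def)
        then show "exp (\<eta> k (h k \<bullet> (x k + t) - c k)) \<le> exp (\<eta> k (h k \<bullet> t - \<delta> k))" by simp
      qed
      also have "\<dots> \<le> risk_pot (\<delta> k) (\<eta> k) (P k)"
        unfolding risk_pot_def
        by (rule SUP_upper2[where i="(h k, p k)"]) (use facts[OF k] hx[OF k] in auto)
      finally show "(\<integral>\<^sup>+t. ennreal (exp (\<eta> k (h k \<bullet> (x k + t) - c k)) * p k t) \<partial>lborel)
          \<le> risk_pot (\<delta> k) (\<eta> k) (P k)" .
    qed
    finally show ?case unfolding xp by simp
  qed
qed

end
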